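(* Let $\alpha\in\mathbb{R}^n_{>0}$ be generic and let $i\ne j$ in $\{1,\dots,n\}$. Then the circle bundle $\widetilde{V}_j|_{X(\alpha)\setminus D_{i,j}(\alpha)}\to X(\alpha)\setminus D_{i,j}(\alpha)$ has a section.
   Context: $\alpha$ generic: $\sum_{i\in S}\alpha_i-\sum_{i\notin S}\alpha_i\ne0$ for every $S\subset\{1,\dots,n\}$. Hyperpolygon space: $(p,q)\in T^*\mathbb{C}^{2n}$ with $p_i=(a_i,b_i)$ row and $q_i=(c_i,d_i)^t$ column vectors in $\mathbb{C}^2$; $K=(SU(2)\times U(1)^n)/\mathbb{Z}_2$ acts by $(p,q)\cdot[A;e_1,\dots,e_n]=((e_i^{-1}p_iA)_i,(A^{-1}q_ie_i)_i)$; $\mu_{\mathbb{R}}(p,q)=\frac{\mathbf{i}}{2}\sum_i(q_iq_i^*-p_i^*p_i)_0\oplus(\tfrac12(|q_i|^2-|p_i|^2))_i$, $\mu_{\mathbb{C}}(p,q)=-\sum_i(q_ip_i)_0\oplus(\mathbf{i}p_iq_i)_i$ ($(\cdot)_0$ trace-free part); $X(\alpha)=(\mu_{\mathbb{R}}^{-1}(0,\alpha)\cap\mu_{\mathbb{C}}^{-1}(0,0))/K$. Identify $\mathbf{i}\,\mathfrak{su}(2)\cong\mathbb{R}^3$. Circle bundles: $\widetilde{Q}_j=\{(p,q)\in\mu_{\mathbb{R}}^{-1}(0,\alpha)\cap\mu_{\mathbb{C}}^{-1}(0):(q_jq_j^*-p_j^*p_j)_0=\mathrm{diag}(t,-t),\,t>0\}$;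 $\rho_{SO(3)}:K\to SO(3)$, $[A;e]\mapsto\mathrm{Ad}(A)$; $Q_j=\widetilde{Q}_j/\ker\rho_{SO(3)}$ is a principal $S^1/\{\pm1\}$-bundle over $X(\alpha)$ via $e^{\mathbf{i}t}\mapsto[\mathrm{diag}(e^{\mathbf{i}t},e^{-\mathbf{i}t});1,\dots,1]$; $L_j=Q_j\times_{\rho_j}\mathbb{C}$ with $\rho_j([A;e])=e_j^2$; $\widetilde{V}_j$ is the principal circle bundle associated to the dual line bundle $L_j^*$ (the circle acts by rotation about the axis of the vector $(q_jq_j^*-p_j^*p_j)_0$). $D_{i,j}(\alpha)$ is the set of $[p,q]\in X(\alpha)$ for which $(q_iq_i^*-p_i^*p_i)_0$ and $(q_jq_j^*-p_j^*p_j)_0$ are parallel as vectors in $\mathbb{R}^3$. *)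

theory Defs
  imports "HOL-Analysis.Analysis"
begin

text \<open>Points (p,q) of T^*C^{2n}: p i is the row vector p_i = (a_i,b_i), q i is the column
vector q_i = (c_i,d_i)^t, for i in {1..n}; coordinates outside {1..n} are required to be 0.\<close>
type_synonym hp = "(nat \<Rightarrow> complex^2) \<times> (nat \<Rightarrow> complex^2)"

text \<open>Elements [A; e_1,...,e_n] of K = (SU(2) x U(1)^n)/Z_2, represented by a pair (A,e).\<close>
type_synonym kel = "(complex^2^2) \<times> (nat \<Rightarrow> complex)"

definition cadj :: "complex^2^2 \<Rightarrow> complex^2^2" where
  "cadj A = (\<chi> r s. cnj (A $ s $ r))"

definition SU2 :: "(complex^2^2) set" where
  "SU2 = {A. A ** cadj A = mat 1 \<and> det A = 1}"

definition Kgrp :: "nat \<Rightarrow> kel set" where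
  "Kgrp n = {(A, e). A \<in> SU2 \<and> (\<forall>i\<in>{1..n}. cmod (e i) = 1)}"

definition kact :: "hp \<Rightarrow> kel \<Rightarrow> hp" where
  "kact pq k = (\<lambda>i. inverse (snd k i) *s (fst pq i v* fst k),
                \<lambda>i. snd k i *s (cadj (fst k) *v snd pq i))"

definition tf :: "complex^2^2 \<Rightarrow> complex^2^2" where
  "tf M = M - mat ((M$1$1 + M$2$2) / 2)"

definition colrow :: "complex^2 \<Rightarrow> complex^2 \<Rightarrow> complex^2^2" where
  "colrow x y = (\<chi> r s. x $ r * y $ s)"

definition Hmat :: "hp \<Rightarrow> nat \<Rightarrow> complex^2^2" where
  "Hmat pq i = (\<chi> r s. snd pq i $ r * cnj (snd pq i $ s)) - (\<chi> r s. cnj (fst pq i $ r) * fst pq i $ s)"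

definition rowcol :: "complex^2 \<Rightarrow> complex^2 \<Rightarrow> complex" where
  "rowcol x y = x$1 * y$1 + x$2 * y$2"

text \<open>The level set mu_R^{-1}(0,alpha) \<inter> mu_C^{-1}(0,0).  The real moment map is
 (i/2) sum_i (q_i q_i^* - p_i^* p_i)_0 (+) (1/2 (|q_i|^2-|p_i|^2))_i, the complex one
 - sum_i (q_i p_i)_0 (+) (i p_i q_i)_i.\<close>
definition levelset :: "nat \<Rightarrow> (nat \<Rightarrow> real) \<Rightarrow> hp set" where
  "levelset n \<alpha> = {pq. (\<forall>i. i \<notin> {1..n} \<longrightarrow> fst pq i = 0 \<and> snd pq i = 0)
     \<and> mat (\<i> / 2) ** (\<Sum>i\<in>{1..n}. tf (Hmat pq i)) = 0
     \<and> (\<forall>i\<in>{1..n}. (norm (snd pq i))\<^sup>2 / 2 - (norm (fst pq i))\<^sup>2 / 2 = \<alpha> i)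
     \<and> - (\<Sum>i\<in>{1..n}. tf (colrow (snd pq i) (fst pq i))) = 0
     \<and> (\<forall>i\<in>{1..n}. \<i> * rowcol (fst pq i) (snd pq i) = 0)}"

definition generic :: "nat \<Rightarrow> (nat \<Rightarrow> real) \<Rightarrow> bool" where
  "generic n \<alpha> \<longleftrightarrow> (\<forall>S\<subseteq>{1..n}. (\<Sum>i\<in>S. \<alpha> i) - (\<Sum>i\<in>{1..n}-S. \<alpha> i) \<noteq> 0)"

definition quot_top :: "'a topology \<Rightarrow> 'a set set \<Rightarrow> 'a set topology" where
  "quot_top T Q = topology (\<lambda>U. U \<subseteq> Q \<and> openin T (\<Union>U))"

definition Korbit :: "nat \<Rightarrow> hp \<Rightarrow> hp set" where
  "Korbit n pq = {kact pq k | k. k \<in> Kgrp n}"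

definition Xset :: "nat \<Rightarrow> (nat \<Rightarrow> real) \<Rightarrow> hp set set" where
  "Xset n \<alpha> = Korbit n ` levelset n \<alpha>"

definition Xtop :: "nat \<Rightarrow> (nat \<Rightarrow> real) \<Rightarrow> hp set topology" where
  "Xtop n \<alpha> = quot_top (top_of_set (levelset n \<alpha>)) (Xset n \<alpha>)"

text \<open>Two trace-free hermitian (up to i) matrices are parallel as vectors of i su(2) = R^3.\<close>
definition parallel :: "complex^2^2 \<Rightarrow> complex^2^2 \<Rightarrow> bool" where
  "parallel M N \<longleftrightarrow> (\<exists>c::real. M = c *\<^sub>R N) \<or> (\<exists>c::real. N = c *\<^sub>R M)"

definition Dset :: "nat \<Rightarrow> (nat \<Rightarrow> real) \<Rightarrow> nat \<Rightarrow> nat \<Rightarrow> hp set set" where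
  "Dset n \<alpha> i j = {x \<in> Xset n \<alpha>. \<exists>pq\<in>x. parallel (tf (Hmat pq i)) (tf (Hmat pq j))}"

definition rho :: "nat \<Rightarrow> kel \<Rightarrow> complex" where
  "rho j k = (snd k j)\<^sup>2"

text \<open>The unit circle bundle of L_j^*, where L_j = levelset \<times>_K C with K acting on C through rho_j:
 total space = (levelset \<times> S^1)/K, with (m,z) ~ (m.k, rho_j(k) z); projection [m,z] \<mapsto> [m].\<close>
definition Vorbit :: "nat \<Rightarrow> nat \<Rightarrow> hp \<times> complex \<Rightarrow> (hp \<times> complex) set" where
  "Vorbit n j mz = {(kact (fst mz) k, rho j k * snd mz) | k. k \<in> Kgrp n}"

definition Vset :: "nat \<Rightarrow> (nat \<Rightarrow> real) \<Rightarrow> nat \<Rightarrow> (hp \<times> complex) set set" where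
  "Vset n \<alpha> j = Vorbit n j ` (levelset n \<alpha> \<times> sphere 0 1)"

definition Vtop :: "nat \<Rightarrow> (nat \<Rightarrow> real) \<Rightarrow> nat \<Rightarrow> (hp \<times> complex) set topology" where
  "Vtop n \<alpha> j = quot_top (top_of_set (levelset n \<alpha> \<times> sphere 0 1)) (Vset n \<alpha> j)"

definition Vproj :: "(hp \<times> complex) set \<Rightarrow> hp set" where
  "Vproj v = fst ` v"

end

theory Submission
  imports Defs
begin

lemmas cx = vec_eq_iff forall_2 sum_2 matrix_matrix_mult_def matrix_vector_mult_def
  vector_matrix_mult_def mat_def cadj_def

lemma cadj_mul: "cadj (A ** B) = cadj B ** (cadj A :: complex^2^2)"
  by (simp add: cx algebra_simps)

lemma cadj_cadj: "cadj (cadj A) = A"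
  by (simp add: cx)

lemma cadj_one: "cadj (mat 1 :: complex^2^2) = mat 1"
  by (simp add: cx)

lemma det_cadj: "det (cadj A) = cnj (det (A::complex^2^2))"
  by (simp add: det_2 cadj_def)

lemma SU2_left: "A \<in> SU2 \<Longrightarrow> cadj A ** A = mat 1"
  unfolding SU2_def using matrix_left_right_inverse by blast

lemma SU2_right: "A \<in> SU2 \<Longrightarrow> A ** cadj A = mat 1"
  unfolding SU2_def by blast

lemma SU2_mul: "A \<in> SU2 \<Longrightarrow> B \<in> SU2 \<Longrightarrow> A ** B \<in> SU2"
  unfolding SU2_def
  by (simp add: cadj_mul det_mul matrix_mul_assoc)
    (metis matrix_mul_assoc matrix_mul_rid)

lemma SU2_cadj: "A \<in> SU2 \<Longrightarrow> cadj A \<in> SU2"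
  using SU2_left[of A] unfolding SU2_def by (simp add: cadj_cadj det_cadj)

lemma SU2_one: "mat 1 \<in> SU2"
  by (simp add: SU2_def cadj_one)

definition kmul :: "kel \<Rightarrow> kel \<Rightarrow> kel" where
  "kmul k k' = (fst k ** fst k', \<lambda>i. snd k i * snd k' i)"
definition kinv :: "kel \<Rightarrow> kel" where
  "kinv k = (cadj (fst k), \<lambda>i. inverse (snd k i))"
definition kone :: kel where "kone = (mat 1, \<lambda>i. 1)"
definition zo :: "nat \<Rightarrow> hp \<Rightarrow> bool" where
  "zo n pq \<longleftrightarrow> (\<forall>i. i \<notin> {1..n} \<longrightarrow> fst pq i = 0 \<and> snd pq i = 0)"

lemma smul_vm: "(c *s x) v* (A::complex^2^2) = c *s (x v* A)"
  by (simp add: cx algebra_simps)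
lemma mv_smul: "(A::complex^2^2) *v (c *s x) = c *s (A *v x)"
  by (simp add: cx algebra_simps)
lemma kact_kact: "kact (kact m k) k' = kact m (kmul k k')"
  unfolding kact_def kmul_def by (simp add: smul_vm mv_smul vector_matrix_mul_assoc
       matrix_vector_mul_assoc cadj_mul mult.commute)

lemma kact_one: "kact m kone = m"
  unfolding kact_def kone_def by (simp add: cadj_one)

lemma kmul_K: "k \<in> Kgrp n \<Longrightarrow> k' \<in> Kgrp n \<Longrightarrow> kmul k k' \<in> Kgrp n"
  by (auto simp: Kgrp_def kmul_def SU2_mul norm_mult)

lemma kinv_K: "k \<in> Kgrp n \<Longrightarrow> kinv k \<in> Kgrp n"
  by (auto simp: Kgrp_def kinv_def SU2_cadj norm_inverse)

lemma kone_K: "kone \<in> Kgrp n"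
  by (auto simp: Kgrp_def kone_def SU2_one)

lemma zero_vm: "0 v* (A::complex^2^2) = 0"
  by (simp add: cx)
lemma zo_kact: "zo n m \<Longrightarrow> zo n (kact m k)"
  by (simp add: zo_def kact_def zero_vm)

lemma kact_inv: assumes "zo n m" "k \<in> Kgrp n" shows "kact (kact m k) (kinv k) = m"
proof -
  obtain A e where k: "k = (A, e)" by (cases k)
  have A: "A ** cadj A = mat 1" using assms(2) k by (simp add: Kgrp_def SU2_def)
  have e1: "\<forall>i\<in>{1..n}. cmod (e i) = 1" using assms(2) k by (simp add: Kgrp_def)
  have e: "e i \<noteq> 0" if "i \<in> {1..n}" for i
  proof -
    have "cmod (e i) = 1" using e1 that by blast
    thus ?thesis by auto
  qed
  have km: "kmul k (kinv k) = (mat 1, \<lambda>i. e i * inverse (e i))" using A by (simp add: kmul_def kinv_def k)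
  have z: "i \<notin> {1..n} \<Longrightarrow> fst m i = 0 \<and> snd m i = 0" for i using assms(1) unfolding zo_def by blast
  have p: "inverse (e i * inverse (e i)) *s (fst m i v* mat 1) = fst m i" for i
  proof (cases "i \<in> {1..n}")
    case True thus ?thesis using e[of i] by simp
  next
    case False thus ?thesis using z[of i] by simp
  qed
  have q: "(e i * inverse (e i)) *s (cadj (mat 1) *v snd m i) = snd m i" for i
  proof (cases "i \<in> {1..n}")
    case True thus ?thesis using e[of i] by (simp add: cadj_one)
  next
    case False thus ?thesis using z[of i] by simp
  qed
  have "kact m (kmul k (kinv k)) = m"
    unfolding km kact_def using p q by (simp add: prod_eq_iff)
  thus ?thesis by (simp only: kact_kact)
qed

lemma Kgrp_e: "k \<in> Kgrp n \<Longrightarrow> i \<in> {1..n} \<Longrightarrow> cmod (snd k i) = 1"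
  unfolding Kgrp_def by auto
lemma Kgrp_e0: "k \<in> Kgrp n \<Longrightarrow> i \<in> {1..n} \<Longrightarrow> snd k i \<noteq> 0"
  using Kgrp_e by fastforce
lemma Kgrp_A: "k \<in> Kgrp n \<Longrightarrow> fst k \<in> SU2"
  unfolding Kgrp_def by auto

lemma rho_mul: "rho j (kmul k k') = rho j k * rho j k'"
  by (simp add: rho_def kmul_def power_mult_distrib)

lemma rho_inv: assumes "k \<in> Kgrp n" "j \<in> {1..n}" shows "rho j (kinv k) * rho j k = 1"
proof -
  have "snd k j \<noteq> 0" using Kgrp_e0 assms .
  thus ?thesis by (simp add: rho_def kinv_def power_mult_distrib[symmetric])
qed

lemma rho_norm: "k \<in> Kgrp n \<Longrightarrow> j \<in> {1..n} \<Longrightarrow> cmod (rho j k) = 1"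
  using Kgrp_e by (simp add: rho_def norm_power)

lemma Korbit_self: "m \<in> Korbit n m"
  unfolding Korbit_def using kact_one kone_K by (metis (mono_tags, lifting) mem_Collect_eq)

lemma Korbit_sub: assumes "y \<in> Korbit n m" shows "Korbit n y \<subseteq> Korbit n m"
proof
  fix x assume "x \<in> Korbit n y"
  then obtain k' where "k' \<in> Kgrp n" "x = kact y k'" by (auto simp: Korbit_def)
  moreover obtain k where "k \<in> Kgrp n" "y = kact m k" using assms by (auto simp: Korbit_def)
  ultimately show "x \<in> Korbit n m" unfolding Korbit_def using kact_kact kmul_K by blast
qed

lemma Korbit_eq: assumes "zo n m" "y \<in> Korbit n m" shows "Korbit n y = Korbit n m"
proof
  show "Korbit n y \<subseteq> Korbit n m" using Korbit_sub assms(2) .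
  obtain k where k: "k \<in> Kgrp n" "y = kact m k" using assms by (auto simp: Korbit_def)
  have "m \<in> Korbit n y" unfolding Korbit_def using kact_inv[OF assms(1) k(1)] kinv_K[OF k(1)] k(2)
    by (metis (mono_tags, lifting) mem_Collect_eq)
  thus "Korbit n m \<subseteq> Korbit n y" using Korbit_sub by blast
qed

lemma Vorbit_self: "mz \<in> Vorbit n j mz"
proof -
  have "rho j kone = 1" by (simp add: rho_def kone_def)
  hence "mz = (kact (fst mz) kone, rho j kone * snd mz)" by (simp add: kact_one)
  thus ?thesis unfolding Vorbit_def using kone_K by blast
qed

lemma Vorbit_sub: assumes "y \<in> Vorbit n j mz" shows "Vorbit n j y \<subseteq> Vorbit n j mz"
proof
  fix x assume "x \<in> Vorbit n j y"
  then obtain k' where "k' \<in> Kgrp n" "x = (kact (fst y) k', rho j k' * snd y)" by (auto simp: Vorbit_def)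
  moreover obtain k where "k \<in> Kgrp n" "y = (kact (fst mz) k, rho j k * snd mz)" using assms by (auto simp: Vorbit_def)
  ultimately have "x = (kact (fst mz) (kmul k k'), rho j (kmul k k') * snd mz)" "kmul k k' \<in> Kgrp n"
    by (simp_all add: kact_kact rho_mul kmul_K mult.commute mult.left_commute)
  thus "x \<in> Vorbit n j mz" unfolding Vorbit_def by blast
qed

lemma Vorbit_eq: assumes "zo n (fst mz)" "j \<in> {1..n}" "y \<in> Vorbit n j mz" shows "Vorbit n j y = Vorbit n j mz"
proof
  show "Vorbit n j y \<subseteq> Vorbit n j mz" using Vorbit_sub assms(3) .
  obtain k where k: "k \<in> Kgrp n" "y = (kact (fst mz) k, rho j k * snd mz)" using assms by (auto simp: Vorbit_def)
  have "mz = (kact (fst y) (kinv k), rho j (kinv k) * snd y)"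
  proof -
    have "rho j (kinv k) * snd y = (rho j (kinv k) * rho j k) * snd mz" using k(2) by simp
    also have "\<dots> = snd mz" using rho_inv[OF k(1) assms(2)] by simp
    moreover have "kact (fst y) (kinv k) = fst mz" using kact_inv[OF assms(1) k(1)] k(2) by simp
    ultimately show ?thesis by (simp add: prod_eq_iff)
  qed
  hence "mz \<in> Vorbit n j y" unfolding Vorbit_def using kinv_K[OF k(1)] by blast
  thus "Vorbit n j mz \<subseteq> Vorbit n j y" using Vorbit_sub by blast
qed

definition hm :: "complex^2 \<Rightarrow> complex^2 \<Rightarrow> complex^2^2" where
  "hm p q = (\<chi> r s. q $ r * cnj (q $ s)) - (\<chi> r s. cnj (p $ r) * p $ s)"

lemma Hmat_hm: "Hmat pq i = hm (fst pq i) (snd pq i)"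
  by (simp add: Hmat_def hm_def)

lemma hm_trans: "hm (p v* A) (cadj A *v q) = cadj A ** hm p q ** A"
  by (simp add: hm_def cx algebra_simps)

lemma hm_scale: assumes "c * cnj c = 1" shows "hm (inverse c *s p) (c *s q) = hm p q"
proof -
  have "inverse c = cnj c" using assms by (metis inverse_unique)
  hence i: "cnj (inverse c) = c" by simp
  have nz: "cnj c \<noteq> 0" using assms by auto
  show ?thesis using assms nz by (simp add: hm_def cx i algebra_simps) (simp add: \<open>inverse c = cnj c\<close> mult.assoc[symmetric] mult.commute[of _ c])
qed

lemma colrow_trans: "colrow (cadj A *v q) (p v* A) = cadj A ** colrow q p ** A"
  by (simp add: colrow_def cx algebra_simps)

lemma colrow_scale: assumes "c \<noteq> 0" shows "colrow (c *s q) (inverse c *s p) = colrow q p"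
  using assms by (simp add: colrow_def cx)

lemma rowcol_trans: "rowcol (p v* A) (B *v q) = rowcol p ((A ** B) *v q)" for A B :: "complex^2^2"
  by (simp add: rowcol_def cx algebra_simps)

lemma rowcol_scale: assumes "c \<noteq> 0" shows "rowcol (inverse c *s p) (c *s q) = rowcol p q"
  using assms by (simp add: rowcol_def cx field_simps)

lemma tf_alt: "tf M = M - mat (trace M / 2)"
  by (simp add: tf_def trace_def sum_2)

lemma tf_trans: assumes "B ** A = mat 1" "A ** B = mat 1"
  shows "tf (B ** M ** A) = B ** tf M ** (A::complex^2^2)"
proof -
  have t: "trace (B ** M ** A) = trace M"
    by (metis assms(2) matrix_mul_assoc matrix_mul_rid trace_mul_sym)
  have d: "B ** (M - mat c) ** A = B ** M ** A - mat c ** (B ** A)" for c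
    by (simp add: cx algebra_simps)
  show ?thesis unfolding tf_alt t d assms(1) matrix_mul_rid ..
qed

lemma mat_rdistrib: "(B + C) ** (A::complex^2^2) = B ** A + C ** A"
  by (simp add: cx algebra_simps)
lemma mat_ldistrib: "(A::complex^2^2) ** (B + C) = A ** B + A ** C"
  by (simp add: cx algebra_simps)

lemma sum_conj: "finite S \<Longrightarrow> (\<Sum>i\<in>S. B ** f i ** A) = B ** (\<Sum>i\<in>S. f i) ** (A::complex^2^2)"
  for B :: "complex^2^2" and f :: "'a \<Rightarrow> complex^2^2"
  by (induction S rule: finite_induct) (simp_all add: mat_ldistrib mat_rdistrib)

definition hip :: "complex^2 \<Rightarrow> complex^2 \<Rightarrow> complex" where
  "hip x y = cnj (x$1) * y$1 + cnj (x$2) * y$2"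

lemma norm2_hip: "complex_of_real ((norm x)\<^sup>2) = hip x x"
proof -
  have "(norm x)\<^sup>2 = (cmod (x$1))\<^sup>2 + (cmod (x$2))\<^sup>2"
    by (simp add: norm_vec_def L2_set_def sum_2)
  hence "complex_of_real ((norm x)\<^sup>2) = complex_of_real ((cmod (x$1))\<^sup>2) + complex_of_real ((cmod (x$2))\<^sup>2)"
    by simp
  thus ?thesis by (simp only: hip_def complex_norm_square mult.commute)
qed

lemma hip_mv: "hip (B *v x) (B *v y) = hip x ((cadj B ** B) *v y)"
  by (simp add: hip_def cx algebra_simps)

lemma hip_vm: "hip (x v* A) (y v* A) = hip x (y v* (A ** cadj A))"
  by (simp add: hip_def cx algebra_simps)

lemma hip_scale: "c * cnj c = 1 \<Longrightarrow> hip (c *s x) (c *s y) = hip x y"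
  by (simp add: hip_def algebra_simps) (simp add: mult.assoc[symmetric] mult.commute[of _ c])

lemma norm_eq_hip: "norm x = norm y \<longleftrightarrow> hip x x = hip y y"
proof -
  have "norm x = norm y \<longleftrightarrow> (norm x)\<^sup>2 = (norm y)\<^sup>2" by (simp add: power2_eq_iff_nonneg)
  also have "\<dots> \<longleftrightarrow> complex_of_real ((norm x)\<^sup>2) = complex_of_real ((norm y)\<^sup>2)" by (simp only: of_real_eq_iff)
  finally show ?thesis by (simp only: norm2_hip)
qed

lemma unit_cnj: "cmod c = 1 \<Longrightarrow> c * cnj c = 1"
  by (metis complex_norm_square of_real_1 power_one)

lemma mat_half_zero: "mat (\<i> / 2) ** S = 0 \<longleftrightarrow> S = (0::complex^2^2)"
  by (simp add: cx)

lemma level_zo: "m \<in> levelset n \<alpha> \<Longrightarrow> zo n m"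
  by (simp add: levelset_def zo_def)

lemma level_kact: assumes m: "m \<in> levelset n \<alpha>" and k: "k \<in> Kgrp n"
  shows "kact m k \<in> levelset n \<alpha>"
proof -
  obtain A e where ke: "k = (A, e)" by (cases k)
  define B where "B = cadj A"
  have AB: "A ** B = mat 1" using SU2_right Kgrp_A[OF k] ke B_def by simp
  have BA: "B ** A = mat 1" using SU2_left Kgrp_A[OF k] ke B_def by simp
  have ec: "e i * cnj (e i) = 1" if "i \<in> {1..n}" for i using Kgrp_e[OF k that] ke unit_cnj by simp
  have e0: "e i \<noteq> 0" if "i \<in> {1..n}" for i using Kgrp_e0[OF k that] ke by simp
  have eic: "inverse (e i) * cnj (inverse (e i)) = 1" if "i \<in> {1..n}" for i
    using ec[OF that] e0[OF that] by (simp add: field_simps complex_cnj_inverse[symmetric])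
  define m' where "m' = kact m k"
  have fm: "fst m' i = inverse (e i) *s (fst m i v* A)" for i by (simp add: m'_def kact_def ke)
  have sm: "snd m' i = e i *s (B *v snd m i)" for i by (simp add: m'_def kact_def ke B_def)
  have L: "(\<forall>i. i \<notin> {1..n} \<longrightarrow> fst m i = 0 \<and> snd m i = 0)
     \<and> mat (\<i> / 2) ** (\<Sum>i\<in>{1..n}. tf (Hmat m i)) = 0
     \<and> (\<forall>i\<in>{1..n}. (norm (snd m i))\<^sup>2 / 2 - (norm (fst m i))\<^sup>2 / 2 = \<alpha> i)
     \<and> - (\<Sum>i\<in>{1..n}. tf (colrow (snd m i) (fst m i))) = 0
     \<and> (\<forall>i\<in>{1..n}. \<i> * rowcol (fst m i) (snd m i) = 0)" using m by (simp add: levelset_def)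
  have zo': "zo n m'" using zo_kact level_zo[OF m] m'_def by blast
  have H: "tf (Hmat m' i) = B ** tf (Hmat m i) ** A" if "i \<in> {1..n}" for i
  proof -
    have "Hmat m' i = hm (inverse (e i) *s (fst m i v* A)) (e i *s (B *v snd m i))"
      by (simp add: Hmat_hm fm sm)
    also have "\<dots> = hm (fst m i v* A) (B *v snd m i)" using hm_scale ec[OF that] by blast
    also have "\<dots> = B ** Hmat m i ** A" by (simp add: hm_trans B_def Hmat_hm)
    finally show ?thesis using tf_trans[OF BA AB] by simp
  qed
  have S1: "(\<Sum>i\<in>{1..n}. tf (Hmat m' i)) = B ** (\<Sum>i\<in>{1..n}. tf (Hmat m i)) ** A"
    using H by (simp add: sum_conj[symmetric])
  have C: "tf (colrow (snd m' i) (fst m' i)) = B ** tf (colrow (snd m i) (fst m i)) ** A" if "i \<in> {1..n}" for i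
  proof -
    have "colrow (snd m' i) (fst m' i) = colrow (B *v snd m i) (fst m i v* A)"
      using colrow_scale e0[OF that] by (simp add: fm sm)
    also have "\<dots> = B ** colrow (snd m i) (fst m i) ** A" by (simp add: colrow_trans B_def)
    finally show ?thesis using tf_trans[OF BA AB] by simp
  qed
  have S2: "(\<Sum>i\<in>{1..n}. tf (colrow (snd m' i) (fst m' i))) = B ** (\<Sum>i\<in>{1..n}. tf (colrow (snd m i) (fst m i))) ** A"
    using C by (simp add: sum_conj[symmetric])
  have N1: "norm (snd m' i) = norm (snd m i)" if "i \<in> {1..n}" for i
  proof -
    have "cadj B ** B = mat 1" using SU2_right Kgrp_A[OF k] ke B_def by (simp add: cadj_cadj)
    thus ?thesis unfolding norm_eq_hip sm using hip_scale[OF ec[OF that]] by (simp add: hip_mv)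
  qed
  have N2: "norm (fst m' i) = norm (fst m i)" if "i \<in> {1..n}" for i
    unfolding norm_eq_hip fm using hip_scale[OF eic[OF that]] AB by (simp add: hip_vm B_def)
  have R: "rowcol (fst m' i) (snd m' i) = rowcol (fst m i) (snd m i)" if "i \<in> {1..n}" for i
    unfolding fm sm rowcol_scale[OF e0[OF that]] rowcol_trans AB by simp
  have "m' \<in> levelset n \<alpha>"
    unfolding levelset_def mem_Collect_eq
  proof (intro conjI)
    show "\<forall>i. i \<notin> {1..n} \<longrightarrow> fst m' i = 0 \<and> snd m' i = 0" using zo' by (simp add: zo_def)
    show "mat (\<i> / 2) ** (\<Sum>i\<in>{1..n}. tf (Hmat m' i)) = 0" using L S1 by (simp add: mat_half_zero)
    show "\<forall>i\<in>{1..n}. (norm (snd m' i))\<^sup>2 / 2 - (norm (fst m' i))\<^sup>2 / 2 = \<alpha> i" using L N1 N2 by simp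
    show "- (\<Sum>i\<in>{1..n}. tf (colrow (snd m' i) (fst m' i))) = 0" using L S2 by simp
    show "\<forall>i\<in>{1..n}. \<i> * rowcol (fst m' i) (snd m' i) = 0" using L R by simp
  qed
  thus ?thesis by (simp add: m'_def)
qed

definition Wm :: "complex^2 \<Rightarrow> complex^2^2" where
  "Wm u = tf (\<chi> r s. u $ r * cnj (u $ s))"

definition det2 :: "complex^2 \<Rightarrow> complex^2 \<Rightarrow> complex" where
  "det2 u v = u$1 * v$2 - u$2 * v$1"

lemma polyA: fixes v1 :: complex assumes "v1 * u2 - v2 * u1 = 0" "V1 * U2 - V2 * U1 = 0"
  shows "(V1 * v1 + V2 * v2) * (u1 * U1 - (u1 * U1 + u2 * U2) / 2) = (U1 * u1 + U2 * u2) * (v1 * V1 - (v1 * V1 + v2 * V2) / 2)"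
    "(V1 * v1 + V2 * v2) * (u1 * U2) = (U1 * u1 + U2 * u2) * (v1 * V2)"
    "(V1 * v1 + V2 * v2) * (u2 * U1) = (U1 * u1 + U2 * u2) * (v2 * V1)"
    "(V1 * v1 + V2 * v2) * (u2 * U2 - (u1 * U1 + u2 * U2) / 2) = (U1 * u1 + U2 * u2) * (v2 * V2 - (v1 * V1 + v2 * V2) / 2)"
  using assms by algebra+

lemma polyB: fixes v1 :: complex assumes "U1 * v1 + U2 * v2 = 0" "u1 * V1 + u2 * V2 = 0"
  shows "(V1 * v1 + V2 * v2) * (u1 * U1 - (u1 * U1 + u2 * U2) / 2) = - (U1 * u1 + U2 * u2) * (v1 * V1 - (v1 * V1 + v2 * V2) / 2)"
    "(V1 * v1 + V2 * v2) * (u1 * U2) = - (U1 * u1 + U2 * u2) * (v1 * V2)"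
    "(V1 * v1 + V2 * v2) * (u2 * U1) = - (U1 * u1 + U2 * u2) * (v2 * V1)"
    "(V1 * v1 + V2 * v2) * (u2 * U2 - (u1 * U1 + u2 * U2) / 2) = - (U1 * u1 + U2 * u2) * (v2 * V2 - (v1 * V1 + v2 * V2) / 2)"
  using assms by algebra+

lemma polyC: fixes p1 :: complex assumes "p1 * q1 + p2 * q2 = 0" "P1 * Q1 + P2 * Q2 = 0"
  shows "(Q1 * q1 + Q2 * q2) * ((q1 * Q1 - P1 * p1) - ((q1 * Q1 - P1 * p1) + (q2 * Q2 - P2 * p2)) / 2) = (Q1 * q1 + Q2 * q2 + (P1 * p1 + P2 * p2)) * (q1 * Q1 - (q1 * Q1 + q2 * Q2) / 2)"
    "(Q1 * q1 + Q2 * q2) * (q1 * Q2 - P1 * p2) = (Q1 * q1 + Q2 * q2 + (P1 * p1 + P2 * p2)) * (q1 * Q2)"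
    "(Q1 * q1 + Q2 * q2) * (q2 * Q1 - P2 * p1) = (Q1 * q1 + Q2 * q2 + (P1 * p1 + P2 * p2)) * (q2 * Q1)"
    "(Q1 * q1 + Q2 * q2) * ((q2 * Q2 - P2 * p2) - ((q1 * Q1 - P1 * p1) + (q2 * Q2 - P2 * p2)) / 2) = (Q1 * q1 + Q2 * q2 + (P1 * p1 + P2 * p2)) * (q2 * Q2 - (q1 * Q1 + q2 * Q2) / 2)"
  using assms by algebra+

lemma Wm_comp: "Wm u $ 1 $ 1 = u$1 * cnj (u$1) - (u$1 * cnj (u$1) + u$2 * cnj (u$2)) / 2"
  "Wm u $ 1 $ 2 = u$1 * cnj (u$2)" "Wm u $ 2 $ 1 = u$2 * cnj (u$1)"
  "Wm u $ 2 $ 2 = u$2 * cnj (u$2) - (u$1 * cnj (u$1) + u$2 * cnj (u$2)) / 2"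
  by (simp_all add: Wm_def tf_def mat_def)

lemma tfhm_comp:
  "tf (hm p q) $ 1 $ 1 = (q$1 * cnj (q$1) - cnj (p$1) * p$1) - ((q$1 * cnj (q$1) - cnj (p$1) * p$1) + (q$2 * cnj (q$2) - cnj (p$2) * p$2)) / 2"
  "tf (hm p q) $ 1 $ 2 = q$1 * cnj (q$2) - cnj (p$1) * p$2"
  "tf (hm p q) $ 2 $ 1 = q$2 * cnj (q$1) - cnj (p$2) * p$1"
  "tf (hm p q) $ 2 $ 2 = (q$2 * cnj (q$2) - cnj (p$2) * p$2) - ((q$1 * cnj (q$1) - cnj (p$1) * p$1) + (q$2 * cnj (q$2) - cnj (p$2) * p$2)) / 2"
  by (simp_all add: hm_def tf_def mat_def)

lemma idA: assumes "det2 v u = 0"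
  shows "hip v v * Wm u $r $s = hip u u * Wm v $r $s"
proof -
  have h: "v$1 * u$2 - v$2 * u$1 = 0" using assms by (simp add: det2_def)
  have hc: "cnj (v$1) * cnj (u$2) - cnj (v$2) * cnj (u$1) = 0"
    using arg_cong[OF h, of cnj] by simp
  note X = polyA[OF h hc]
  have c1: "hip v v * Wm u $1 $1 = hip u u * Wm v $1 $1" unfolding Wm_comp hip_def by (rule X(1))
  have c2: "hip v v * Wm u $1 $2 = hip u u * Wm v $1 $2" unfolding Wm_comp hip_def by (rule X(2))
  have c3: "hip v v * Wm u $2 $1 = hip u u * Wm v $2 $1" unfolding Wm_comp hip_def by (rule X(3))
  have c4: "hip v v * Wm u $2 $2 = hip u u * Wm v $2 $2" unfolding Wm_comp hip_def by (rule X(4))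
  show ?thesis using c1 c2 c3 c4 exhaust_2[of r] exhaust_2[of s] by auto
qed

lemma idB: assumes "hip u v = 0"
  shows "hip v v * Wm u $r $s = - hip u u * Wm v $r $s"
proof -
  have h: "cnj (u$1) * v$1 + cnj (u$2) * v$2 = 0" using assms by (simp add: hip_def)
  have hc: "u$1 * cnj (v$1) + u$2 * cnj (v$2) = 0"
    using arg_cong[OF h, of cnj] by simp
  note X = polyB[OF h hc]
  have c1: "hip v v * Wm u $1 $1 = - hip u u * Wm v $1 $1" unfolding Wm_comp hip_def by (rule X(1))
  have c2: "hip v v * Wm u $1 $2 = - hip u u * Wm v $1 $2" unfolding Wm_comp hip_def by (rule X(2))
  have c3: "hip v v * Wm u $2 $1 = - hip u u * Wm v $2 $1" unfolding Wm_comp hip_def by (rule X(3))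
  have c4: "hip v v * Wm u $2 $2 = - hip u u * Wm v $2 $2" unfolding Wm_comp hip_def by (rule X(4))
  show ?thesis using c1 c2 c3 c4 exhaust_2[of r] exhaust_2[of s] by auto
qed

lemma idC: assumes "rowcol p q = 0"
  shows "hip q q * tf (hm p q) $r $s = (hip q q + hip p p) * Wm q $r $s"
proof -
  have h: "p$1 * q$1 + p$2 * q$2 = 0" using assms by (simp add: rowcol_def)
  have hc: "cnj (p$1) * cnj (q$1) + cnj (p$2) * cnj (q$2) = 0"
    using arg_cong[OF h, of cnj] by simp
  note X = polyC[OF h hc]
  have c1: "hip q q * tf (hm p q) $1 $1 = (hip q q + hip p p) * Wm q $1 $1" unfolding Wm_comp tfhm_comp hip_def by (rule X(1))
  have c2: "hip q q * tf (hm p q) $1 $2 = (hip q q + hip p p) * Wm q $1 $2" unfolding Wm_comp tfhm_comp hip_def by (rule X(2))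
  have c3: "hip q q * tf (hm p q) $2 $1 = (hip q q + hip p p) * Wm q $2 $1" unfolding Wm_comp tfhm_comp hip_def by (rule X(3))
  have c4: "hip q q * tf (hm p q) $2 $2 = (hip q q + hip p p) * Wm q $2 $2" unfolding Wm_comp tfhm_comp hip_def by (rule X(4))
  show ?thesis using c1 c2 c3 c4 exhaust_2[of r] exhaust_2[of s] by auto
qed

definition zf :: "nat \<Rightarrow> nat \<Rightarrow> hp \<Rightarrow> complex" where
  "zf i j pq = det2 (snd pq j) (snd pq i) * hip (snd pq i) (snd pq j)"

lemma det2_trans: "det2 (B *v u) (B *v v) = det B * det2 u v" for B :: "complex^2^2"
  by (simp add: det2_def det_2 cx algebra_simps)

lemma det2_scale: "det2 (a *s u) (b *s v) = a * b * det2 u v"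
  by (simp add: det2_def algebra_simps)

lemma hip_scale2: "hip (a *s u) (b *s v) = cnj a * b * hip u v"
  by (simp add: hip_def algebra_simps)

lemma zf_kact: assumes k: "k \<in> Kgrp n" and ij: "i \<in> {1..n}" "j \<in> {1..n}"
  shows "zf i j (kact m k) = rho j k * zf i j m"
proof -
  obtain A e where ke: "k = (A, e)" by (cases k)
  define B where "B = cadj A"
  have A: "A \<in> SU2" using Kgrp_A[OF k] ke by simp
  have dB: "det B = 1" using A by (simp add: B_def det_cadj SU2_def)
  have BB: "cadj B ** B = mat 1" using SU2_right[OF A] by (simp add: B_def cadj_cadj)
  have ei: "e i * cnj (e i) = 1" using Kgrp_e[OF k ij(1)] ke unit_cnj by simp
  have sm: "snd (kact m k) l = e l *s (B *v snd m l)" for l by (simp add: kact_def ke B_def)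
  have "zf i j (kact m k) = (e j * e i * det2 (snd m j) (snd m i)) * (cnj (e i) * e j * hip (snd m i) (snd m j))"
    unfolding zf_def sm det2_scale hip_scale2 det2_trans dB hip_mv BB by simp
  also have "\<dots> = e j ^ 2 * (e i * cnj (e i)) * zf i j m" by (simp add: zf_def power2_eq_square algebra_simps)
  also have "\<dots> = rho j k * zf i j m" using ei by (simp add: rho_def ke)
  finally show ?thesis .
qed

lemma scaleR_comp: "((c::real) *\<^sub>R (M::complex^2^2)) $ r $ s = of_real c * M $ r $ s"
  by (metis vector_scaleR_component scaleR_conv_of_real)

lemma field_step: fixes H G Wi Wj ai aj bi bj sg :: complex
  assumes "ai \<noteq> 0" "aj \<noteq> 0" "bj \<noteq> 0" "ai * H = bi * Wi" "aj * G = bj * Wj" "aj * Wi = sg * ai * Wj"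
  shows "H = (sg * bi / bj) * G"
proof -
  have "ai * aj * (bj * H - sg * bi * G) = 0" using assms(4-6) by algebra
  hence "bj * H = sg * bi * G" using assms(1,2) by simp
  thus ?thesis using assms(3) by (simp add: field_simps)
qed

lemma level_facts: assumes "pq \<in> levelset n \<alpha>" "k \<in> {1..n}" "\<alpha> k > 0"
  shows "rowcol (fst pq k) (snd pq k) = 0" "(norm (snd pq k))\<^sup>2 > 0"
    "(norm (snd pq k))\<^sup>2 / 2 - (norm (fst pq k))\<^sup>2 / 2 = \<alpha> k"
proof -
  show "rowcol (fst pq k) (snd pq k) = 0" using assms(1,2) by (simp add: levelset_def)
  show e: "(norm (snd pq k))\<^sup>2 / 2 - (norm (fst pq k))\<^sup>2 / 2 = \<alpha> k" using assms(1,2) by (simp add: levelset_def)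
  have "(norm (fst pq k))\<^sup>2 \<ge> 0" by simp
  thus "(norm (snd pq k))\<^sup>2 > 0" using e assms(3) by linarith
qed

lemma par_of_zf: assumes L: "pq \<in> levelset n \<alpha>" and ij: "i \<in> {1..n}" "j \<in> {1..n}"
  and pos: "\<alpha> i > 0" "\<alpha> j > 0" and z: "zf i j pq = 0"
  shows "parallel (tf (Hmat pq i)) (tf (Hmat pq j))"
proof -
  define ui where "ui = snd pq i"
  define uj where "uj = snd pq j"
  define ai where "ai = (norm ui)\<^sup>2"
  define aj where "aj = (norm uj)\<^sup>2"
  define bi where "bi = ai + (norm (fst pq i))\<^sup>2"
  define bj where "bj = aj + (norm (fst pq j))\<^sup>2"
  note Fi = level_facts[OF L ij(1) pos(1)] and Fj = level_facts[OF L ij(2) pos(2)]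
  have ai0: "ai > 0" using Fi(2) by (simp add: ai_def ui_def)
  have aj0: "aj > 0" using Fj(2) by (simp add: aj_def uj_def)
  have bj0: "bj > 0" using aj0 by (simp add: bj_def add_pos_nonneg)
  have hi: "hip ui ui = of_real ai" unfolding ai_def by (rule norm2_hip[symmetric])
  have hj: "hip uj uj = of_real aj" unfolding aj_def by (rule norm2_hip[symmetric])
  have Ci: "of_real ai * tf (Hmat pq i) $ r $ s = of_real bi * Wm ui $ r $ s" for r s
    using idC[OF Fi(1), of r s] by (simp add: Hmat_hm ui_def ai_def bi_def norm2_hip[symmetric])
  have Cj: "of_real aj * tf (Hmat pq j) $ r $ s = of_real bj * Wm uj $ r $ s" for r s
    using idC[OF Fj(1), of r s] by (simp add: Hmat_hm uj_def aj_def bj_def norm2_hip[symmetric])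
  obtain sg :: real where sg: "\<And>r s. of_real aj * Wm ui $ r $ s = of_real sg * of_real ai * Wm uj $ r $ s"
  proof (cases "det2 uj ui = 0")
    case True
    show ?thesis by (rule that[of 1]) (use idA[OF True] hi hj in simp)
  next
    case False
    hence "hip ui uj = 0" using z by (simp add: zf_def ui_def uj_def)
    show ?thesis by (rule that[of "-1"]) (use idB[OF \<open>hip ui uj = 0\<close>] hi hj in simp)
  qed
  have "tf (Hmat pq i) $ r $ s = (of_real sg * of_real bi / of_real bj) * tf (Hmat pq j) $ r $ s" for r s
    by (rule field_step[OF _ _ _ Ci Cj sg]) (use ai0 aj0 bj0 in auto)
  hence "\<forall>r s. tf (Hmat pq i) $ r $ s = ((sg * bi / bj) *\<^sub>R tf (Hmat pq j)) $ r $ s"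
    unfolding scaleR_comp by simp
  hence "tf (Hmat pq i) = (sg * bi / bj) *\<^sub>R tf (Hmat pq j)"
    by (simp add: vec_eq_iff)
  thus ?thesis unfolding parallel_def by blast
qed

lemma quot_top_open:
  assumes P: "\<And>a b. a \<in> Q \<Longrightarrow> b \<in> Q \<Longrightarrow> a \<inter> b \<noteq> {} \<Longrightarrow> a = b"
  shows "openin (quot_top T Q) U \<longleftrightarrow> U \<subseteq> Q \<and> openin T (\<Union>U)"
proof -
  have A1: "S \<inter> R \<subseteq> Q \<and> openin T (\<Union>(S \<inter> R))"
    if S: "S \<subseteq> Q \<and> openin T (\<Union>S)" and R: "R \<subseteq> Q \<and> openin T (\<Union>R)" for S R
  proof -
    have "\<Union>(S \<inter> R) = \<Union>S \<inter> \<Union>R"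
    proof
      show "\<Union>(S \<inter> R) \<subseteq> \<Union>S \<inter> \<Union>R" by blast
      show "\<Union>S \<inter> \<Union>R \<subseteq> \<Union>(S \<inter> R)"
      proof
        fix x assume "x \<in> \<Union>S \<inter> \<Union>R"
        then obtain a b where "a \<in> S" "b \<in> R" "x \<in> a" "x \<in> b" by blast
        moreover have "a = b" using P[of a b] S R calculation by blast
        ultimately show "x \<in> \<Union>(S \<inter> R)" by blast
      qed
    qed
    thus ?thesis using S R by auto
  qed
  have A2: "\<Union>K \<subseteq> Q \<and> openin T (\<Union>(\<Union>K))" if "\<forall>K\<in>K. K \<subseteq> Q \<and> openin T (\<Union>K)" for K
  proof -
    have "\<Union>(\<Union>K) = \<Union>((\<lambda>k. \<Union>k) ` K)" by blast
    moreover have "openin T (\<Union>((\<lambda>k. \<Union>k) ` K))" using that by (intro openin_Union) blast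
    ultimately show ?thesis using that by auto
  qed
  have "istopology (\<lambda>U. U \<subseteq> Q \<and> openin T (\<Union>U))"
    unfolding istopology_def using A1 A2 by blast
  thus ?thesis unfolding quot_top_def by simp
qed

lemma quot_top_topspace:
  assumes P: "\<And>a b. a \<in> Q \<Longrightarrow> b \<in> Q \<Longrightarrow> a \<inter> b \<noteq> {} \<Longrightarrow> a = b"
    and U: "\<Union>Q = topspace T"
  shows "topspace (quot_top T Q) = Q"
proof -
  have "openin (quot_top T Q) Q" using quot_top_open[OF P] U by simp
  moreover have "openin (quot_top T Q) S \<Longrightarrow> S \<subseteq> Q" for S using quot_top_open[OF P] by blast
  ultimately show ?thesis unfolding topspace_def by blast
qed

lemma cont_comp: "continuous_on UNIV (\<lambda>pq::hp. snd pq l $ r)"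
proof -
  have c1: "continuous_on UNIV (\<lambda>pq::hp. snd pq)" by (intro continuous_intros)
  have c2: "continuous_on UNIV (\<lambda>f::nat \<Rightarrow> complex^2. f l)" by simp
  have c3: "continuous_on UNIV (\<lambda>v::complex^2. v $ r)" by (simp add: continuous_at_imp_continuous_on)
  show ?thesis using continuous_on_compose2[OF c3 continuous_on_compose2[OF c2 c1]] by simp
qed

lemma zf_cont: "continuous_on UNIV (zf i j)"
  unfolding zf_def det2_def hip_def
  by (intro continuous_intros cont_comp)

lemma PX: assumes "a \<in> Xset n \<alpha>" "b \<in> Xset n \<alpha>" "a \<inter> b \<noteq> {}" shows "a = b"
proof -
  obtain m1 where m1: "m1 \<in> levelset n \<alpha>" "a = Korbit n m1" using assms(1) by (auto simp: Xset_def)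
  obtain m2 where m2: "m2 \<in> levelset n \<alpha>" "b = Korbit n m2" using assms(2) by (auto simp: Xset_def)
  obtain c where c: "c \<in> a" "c \<in> b" using assms(3) by blast
  have "Korbit n c = a" using Korbit_eq[OF level_zo[OF m1(1)]] c(1) m1(2) by simp
  moreover have "Korbit n c = b" using Korbit_eq[OF level_zo[OF m2(1)]] c(2) m2(2) by simp
  ultimately show ?thesis by simp
qed

lemma PV: assumes j: "j \<in> {1..n}" and "a \<in> Vset n \<alpha> j" "b \<in> Vset n \<alpha> j" "a \<inter> b \<noteq> {}" shows "a = b"
proof -
  obtain y1 where y1: "y1 \<in> levelset n \<alpha> \<times> sphere (0::complex) 1" "a = Vorbit n j y1" using assms(2) by (auto simp: Vset_def)
  obtain y2 where y2: "y2 \<in> levelset n \<alpha> \<times> sphere (0::complex) 1" "b = Vorbit n j y2" using assms(3) by (auto simp: Vset_def)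
  obtain c where c: "c \<in> a" "c \<in> b" using assms(4) by blast
  have z1: "zo n (fst y1)" using y1(1) level_zo by auto
  have z2: "zo n (fst y2)" using y2(1) level_zo by auto
  have "Vorbit n j c = a" using Vorbit_eq[OF z1 j] c(1) y1(2) by simp
  moreover have "Vorbit n j c = b" using Vorbit_eq[OF z2 j] c(2) y2(2) by simp
  ultimately show ?thesis by simp
qed

lemma Korbit_level: "m \<in> levelset n \<alpha> \<Longrightarrow> Korbit n m \<subseteq> levelset n \<alpha>"
  unfolding Korbit_def using level_kact by blast

lemma UX: "\<Union>(Xset n \<alpha>) = levelset n \<alpha>"
proof
  show "\<Union>(Xset n \<alpha>) \<subseteq> levelset n \<alpha>"
  proof
    fix x assume "x \<in> \<Union>(Xset n \<alpha>)"
    then obtain m where "m \<in> levelset n \<alpha>" "x \<in> Korbit n m" by (auto simp: Xset_def)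
    thus "x \<in> levelset n \<alpha>" using Korbit_level by blast
  qed
  show "levelset n \<alpha> \<subseteq> \<Union>(Xset n \<alpha>)"
  proof
    fix m assume "m \<in> levelset n \<alpha>"
    hence "Korbit n m \<in> Xset n \<alpha>" by (simp add: Xset_def)
    thus "m \<in> \<Union>(Xset n \<alpha>)" using Korbit_self by blast
  qed
qed

lemma Vorbit_level: assumes "y \<in> levelset n \<alpha> \<times> sphere (0::complex) 1" "j \<in> {1..n}"
  shows "Vorbit n j y \<subseteq> levelset n \<alpha> \<times> sphere (0::complex) 1"
proof
  fix x assume "x \<in> Vorbit n j y"
  then obtain k where k: "k \<in> Kgrp n" "x = (kact (fst y) k, rho j k * snd y)" by (auto simp: Vorbit_def)
  have fy: "fst y \<in> levelset n \<alpha>" using assms(1) by (simp add: mem_Times_iff)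
  have "kact (fst y) k \<in> levelset n \<alpha>" by (rule level_kact[OF fy k(1)])
  moreover have "norm (rho j k * snd y) = 1" using rho_norm[OF k(1) assms(2)] assms(1) by (auto simp: norm_mult)
  ultimately show "x \<in> levelset n \<alpha> \<times> sphere (0::complex) 1" using k(2) by simp
qed

lemma UV: assumes j: "j \<in> {1..n}" shows "\<Union>(Vset n \<alpha> j) = levelset n \<alpha> \<times> sphere (0::complex) 1"
proof
  show "\<Union>(Vset n \<alpha> j) \<subseteq> levelset n \<alpha> \<times> sphere (0::complex) 1"
  proof
    fix x assume "x \<in> \<Union>(Vset n \<alpha> j)"
    then obtain y where "y \<in> levelset n \<alpha> \<times> sphere (0::complex) 1" "x \<in> Vorbit n j y" by (auto simp: Vset_def)
    thus "x \<in> levelset n \<alpha> \<times> sphere (0::complex) 1" using Vorbit_level[OF _ j] by blast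
  qed
  show "levelset n \<alpha> \<times> sphere (0::complex) 1 \<subseteq> \<Union>(Vset n \<alpha> j)"
  proof
    fix y assume "y \<in> levelset n \<alpha> \<times> sphere (0::complex) 1"
    hence "Vorbit n j y \<in> Vset n \<alpha> j" by (simp add: Vset_def)
    thus "y \<in> \<Union>(Vset n \<alpha> j)" using Vorbit_self by blast
  qed
qed

lemma Xtop_open: "openin (Xtop n \<alpha>) U \<longleftrightarrow> U \<subseteq> Xset n \<alpha> \<and> openin (top_of_set (levelset n \<alpha>)) (\<Union>U)"
  unfolding Xtop_def
proof (rule quot_top_open)
  fix a b assume "a \<in> Xset n \<alpha>" "b \<in> Xset n \<alpha>" "a \<inter> b \<noteq> {}" thus "a = b" by (rule PX)
qed

lemma Vtop_open: "j \<in> {1..n} \<Longrightarrow> openin (Vtop n \<alpha> j) U \<longleftrightarrow> U \<subseteq> Vset n \<alpha> j \<and> openin (top_of_set (levelset n \<alpha> \<times> sphere (0::complex) 1)) (\<Union>U)"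
  unfolding Vtop_def
proof (rule quot_top_open)
  fix a b assume "j \<in> {1..n}" "a \<in> Vset n \<alpha> j" "b \<in> Vset n \<alpha> j" "a \<inter> b \<noteq> {}" thus "a = b" by (rule PV)
qed

lemma Xtop_space: "topspace (Xtop n \<alpha>) = Xset n \<alpha>"
  unfolding Xtop_def
proof (rule quot_top_topspace)
  fix a b assume "a \<in> Xset n \<alpha>" "b \<in> Xset n \<alpha>" "a \<inter> b \<noteq> {}" thus "a = b" by (rule PX)
next
  show "\<Union>(Xset n \<alpha>) = topspace (top_of_set (levelset n \<alpha>))" using UX by simp
qed

lemma Vtop_space: "j \<in> {1..n} \<Longrightarrow> topspace (Vtop n \<alpha> j) = Vset n \<alpha> j"
  unfolding Vtop_def
proof (rule quot_top_topspace)
  fix a b assume "j \<in> {1..n}" "a \<in> Vset n \<alpha> j" "b \<in> Vset n \<alpha> j" "a \<inter> b \<noteq> {}" thus "a = b" by (rule PV)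
next
  assume "j \<in> {1..n}"
  thus "\<Union>(Vset n \<alpha> j) = topspace (top_of_set (levelset n \<alpha> \<times> sphere (0::complex) 1))" using UV by simp
qed

lemma Vproj_Vorbit: "Vproj (Vorbit n j (m, w)) = Korbit n m"
proof
  show "Vproj (Vorbit n j (m, w)) \<subseteq> Korbit n m" unfolding Vproj_def Vorbit_def Korbit_def by force
  show "Korbit n m \<subseteq> Vproj (Vorbit n j (m, w))"
  proof
    fix x assume "x \<in> Korbit n m"
    then obtain k where k: "k \<in> Kgrp n" "x = kact m k" by (auto simp: Korbit_def)
    hence "(x, rho j k * w) = (kact (fst (m, w)) k, rho j k * snd (m, w))" by simp
    hence "(x, rho j k * w) \<in> Vorbit n j (m, w)" unfolding Vorbit_def using k(1) by blast
    thus "x \<in> Vproj (Vorbit n j (m, w))" unfolding Vproj_def by force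
  qed
qed

lemma sgn_unit: "cmod r = 1 \<Longrightarrow> sgn r = r"
  by (simp add: sgn_div_norm)

definition gsec :: "nat \<Rightarrow> nat \<Rightarrow> hp \<Rightarrow> hp \<times> complex" where
  "gsec i j pq = (pq, sgn (zf i j pq))"

lemma g_kact: assumes k: "k \<in> Kgrp n" and ij: "i \<in> {1..n}" "j \<in> {1..n}"
  shows "gsec i j (kact m k) \<in> Vorbit n j (gsec i j m)"
proof -
  have "sgn (zf i j (kact m k)) = rho j k * sgn (zf i j m)"
    unfolding zf_kact[OF k ij] sgn_mult sgn_unit[OF rho_norm[OF k ij(2)]] ..
  hence "gsec i j (kact m k) = (kact (fst (gsec i j m)) k, rho j k * snd (gsec i j m))"
    by (simp add: gsec_def)
  thus ?thesis unfolding Vorbit_def using k by blast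
qed

lemma g_wd: assumes m: "m \<in> levelset n \<alpha>" and pq: "pq \<in> Korbit n m" and ij: "i \<in> {1..n}" "j \<in> {1..n}"
  shows "Vorbit n j (gsec i j pq) = Vorbit n j (gsec i j m)"
proof -
  obtain k where k: "k \<in> Kgrp n" "pq = kact m k" using pq by (auto simp: Korbit_def)
  have z: "zo n (fst (gsec i j m))" using level_zo[OF m] by (simp add: gsec_def)
  show ?thesis using Vorbit_eq[OF z ij(2) g_kact[OF k(1) ij]] k(2) by simp
qed

lemma zf_ne: assumes x: "x \<in> Xset n \<alpha> - Dset n \<alpha> i j" and pq: "pq \<in> x"
  and ij: "i \<in> {1..n}" "j \<in> {1..n}" and pos: "\<alpha> i > 0" "\<alpha> j > 0"
  shows "zf i j pq \<noteq> 0"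
proof
  assume z: "zf i j pq = 0"
  have "pq \<in> levelset n \<alpha>" using x pq UX by blast
  hence "parallel (tf (Hmat pq i)) (tf (Hmat pq j))" using par_of_zf[OF _ ij pos z] by blast
  hence "x \<in> Dset n \<alpha> i j" using x pq unfolding Dset_def by blast
  thus False using x by blast
qed

theorem mainTheorem9:
  fixes n :: nat and \<alpha> :: "nat \<Rightarrow> real" and i j :: nat
  assumes pos: "\<forall>k\<in>{1..n}. \<alpha> k > 0"
    and gen: "generic n \<alpha>"
    and ij: "i \<in> {1..n}" "j \<in> {1..n}" "i \<noteq> j"
  shows "\<exists>s. continuous_map (subtopology (Xtop n \<alpha>) (Xset n \<alpha> - Dset n \<alpha> i j)) (Vtop n \<alpha> j) s
             \<and> (\<forall>x\<in>Xset n \<alpha> - Dset n \<alpha> i j. Vproj (s x) = x)"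
proof -
  define L where "L = levelset n \<alpha>"
  define X where "X = Xset n \<alpha>"
  define D where "D = Dset n \<alpha> i j"
  define g where "g = gsec i j"
  define s where "s x = Vorbit n j (g (SOME pq. pq \<in> x))" for x
  have posi: "\<alpha> i > 0" and posj: "\<alpha> j > 0" using pos ij by auto
  have zne: "zf i j pq \<noteq> 0" if "x \<in> X - D" "pq \<in> x" for x pq
    using zf_ne[OF _ _ ij(1,2) posi posj] that unfolding X_def D_def by blast
  have orb: "\<exists>m\<in>L. x = Korbit n m" if "x \<in> X" for x using that by (auto simp: X_def L_def Xset_def)
  have some: "(SOME pq. pq \<in> x) \<in> x" if "x \<in> X" for x
    using orb[OF that] Korbit_self by (metis someI)
  have sx: "s x = Vorbit n j (g pq)" if xpq: "x \<in> X" "pq \<in> x" for x pq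
  proof -
    obtain m where m: "m \<in> L" "x = Korbit n m" using orb[OF xpq(1)] by blast
    have "Vorbit n j (g pq) = Vorbit n j (g m)" using g_wd[OF _ _ ij(1,2)] m xpq(2) unfolding g_def L_def by blast
    moreover have "Vorbit n j (g (SOME pq. pq \<in> x)) = Vorbit n j (g m)"
      using g_wd[OF _ _ ij(1,2)] m some[OF xpq(1)] unfolding g_def L_def by blast
    ultimately show ?thesis by (simp add: s_def)
  qed
  have inL: "pq \<in> L" if "x \<in> X" "pq \<in> x" for x pq using that UX unfolding X_def L_def by blast
  have gV: "g pq \<in> L \<times> sphere (0::complex) 1" if "pq \<in> L" "zf i j pq \<noteq> 0" for pq
    using that by (simp add: g_def gsec_def norm_sgn)
  have PVj: "a = b" if "a \<in> Vset n \<alpha> j" "b \<in> Vset n \<alpha> j" "a \<inter> b \<noteq> {}" for a b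
    using PV[OF ij(2)] that by blast
  have gself: "g pq \<in> Vorbit n j (g pq)" for pq by (rule Vorbit_self)
  have proj: "Vproj (s x) = x" if xx: "x \<in> X - D" for x
  proof -
    obtain m where m: "m \<in> L" "x = Korbit n m" using orb xx by blast
    have "s x = Vorbit n j (g m)" using sx[of x m] xx m Korbit_self by blast
    also have "\<dots> = Vorbit n j (m, sgn (zf i j m))" by (simp add: g_def gsec_def)
    finally show ?thesis using m(2) by (simp add: Vproj_Vorbit)
  qed
  have intop: "s x \<in> Vset n \<alpha> j" if xx: "x \<in> X - D" for x
  proof -
    obtain m where m: "m \<in> L" "x = Korbit n m" using orb xx by blast
    have mx: "m \<in> x" using m Korbit_self by blast
    have "s x = Vorbit n j (g m)" using sx[of x m] xx mx by blast
    moreover have "Vorbit n j (g m) \<in> Vorbit n j ` (L \<times> sphere 0 1)"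
      by (rule imageI) (rule gV[OF m(1) zne[OF xx mx]])
    ultimately show ?thesis unfolding Vset_def L_def by simp
  qed
  have TX: "topspace (subtopology (Xtop n \<alpha>) (X - D)) = X - D"
    by (simp add: Xtop_space X_def Int_absorb1 Diff_subset)
  have opn: "openin (subtopology (Xtop n \<alpha>) (X - D)) {x \<in> X - D. s x \<in> U}"
    if U: "openin (Vtop n \<alpha> j) U" for U
  proof -
    have U1: "U \<subseteq> Vset n \<alpha> j" and U2: "openin (top_of_set (L \<times> sphere 0 1)) (\<Union>U)"
      using U Vtop_open[OF ij(2)] unfolding L_def by blast+
    obtain Op where Op: "open Op" "\<Union>U = (L \<times> sphere 0 1) \<inter> Op" using U2 openin_open by metis
    define Z where "Z = {pq. zf i j pq \<noteq> 0}"
    have oZ: "open Z"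
    proof -
      have "open (zf i j -` (- {0}) \<inter> UNIV)"
        using zf_cont continuous_on_open_vimage[of UNIV "zf i j"] by blast
      moreover have "zf i j -` (- {0}) \<inter> UNIV = Z" by (auto simp: Z_def)
      ultimately show ?thesis by simp
    qed
    have cg: "continuous_on Z g"
      unfolding g_def gsec_def
      by (intro continuous_intros continuous_on_subset[OF zf_cont]) (auto simp: Z_def)
    define G where "G = g -` Op \<inter> Z"
    have oG: "open G" using continuous_on_open_vimage[OF oZ] cg Op(1) unfolding G_def by blast
    define T where "T = {x \<in> X. \<forall>pq\<in>x. zf i j pq \<noteq> 0 \<and> g pq \<in> \<Union>U}"
    have UT: "\<Union>T = L \<inter> G"
    proof
      show "\<Union>T \<subseteq> L \<inter> G"
      proof
        fix pq assume "pq \<in> \<Union>T"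
        then obtain x where x: "x \<in> X" "pq \<in> x" "zf i j pq \<noteq> 0" "g pq \<in> \<Union>U" unfolding T_def by blast
        have "g pq \<in> Op" using x(4) unfolding Op(2) by simp
        thus "pq \<in> L \<inter> G" using inL[OF x(1,2)] x(3) unfolding G_def Z_def by simp
      qed
      show "L \<inter> G \<subseteq> \<Union>T"
      proof
        fix pq assume pq: "pq \<in> L \<inter> G"
        hence pL: "pq \<in> L" and z: "zf i j pq \<noteq> 0" and gO: "g pq \<in> Op" unfolding G_def Z_def by simp_all
        have gU: "g pq \<in> \<Union>U" unfolding Op(2) using gV[OF pL z] gO by (rule IntI)
        then obtain Ob where Ob: "Ob \<in> U" "g pq \<in> Ob" by blast
        have "Vorbit n j (g pq) \<in> Vorbit n j ` (L \<times> sphere 0 1)"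
          by (rule imageI) (rule gV[OF pL z])
        hence gVs: "Vorbit n j (g pq) \<in> Vset n \<alpha> j" unfolding Vset_def L_def by simp
        have ObV: "Ob = Vorbit n j (g pq)" using PVj[of Ob "Vorbit n j (g pq)"] Ob U1 gVs gself by blast
        define x where "x = Korbit n pq"
        have xX: "x \<in> X" using pL unfolding x_def X_def Xset_def L_def by (rule imageI)
        have "\<forall>pq'\<in>x. zf i j pq' \<noteq> 0 \<and> g pq' \<in> \<Union>U"
        proof
          fix pq' assume "pq' \<in> x"
          then obtain k where k: "k \<in> Kgrp n" "pq' = kact pq k" unfolding x_def Korbit_def by blast
          have "zf i j pq' = rho j k * zf i j pq" using zf_kact[OF k(1) ij(1,2)] k(2) by simp
          moreover have "rho j k \<noteq> 0" using rho_norm[OF k(1) ij(2)] by auto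
          ultimately have "zf i j pq' \<noteq> 0" using z by simp
          moreover have "g pq' \<in> Ob" using g_kact[OF k(1) ij(1,2)] k(2) ObV unfolding g_def by simp
          ultimately show "zf i j pq' \<noteq> 0 \<and> g pq' \<in> \<Union>U" using Ob(1) by blast
        qed
        hence "x \<in> T" using xX unfolding T_def by blast
        moreover have "pq \<in> x" unfolding x_def by (rule Korbit_self)
        ultimately show "pq \<in> \<Union>T" by blast
      qed
    qed
    have oT: "openin (Xtop n \<alpha>) T"
      unfolding Xtop_open
    proof
      show "T \<subseteq> Xset n \<alpha>" unfolding T_def X_def by blast
      show "openin (top_of_set (levelset n \<alpha>)) (\<Union>T)" unfolding UT L_def openin_open
        using oG by blast
    qed
    have eq: "{x \<in> X - D. s x \<in> U} = T \<inter> (X - D)"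
    proof (intro set_eqI iffI)
      fix x assume "x \<in> {x \<in> X - D. s x \<in> U}"
      hence x: "x \<in> X - D" "s x \<in> U" by auto
      have "\<forall>pq\<in>x. zf i j pq \<noteq> 0 \<and> g pq \<in> \<Union>U"
      proof
        fix pq assume pq: "pq \<in> x"
        have "g pq \<in> s x" using sx[of x pq] x pq gself by simp
        thus "zf i j pq \<noteq> 0 \<and> g pq \<in> \<Union>U" using zne[OF x(1) pq] x(2) by blast
      qed
      thus "x \<in> T \<inter> (X - D)" using x unfolding T_def by blast
    next
      fix x assume x: "x \<in> T \<inter> (X - D)"
      have xX: "x \<in> X" using x by blast
      define pq0 where "pq0 = (SOME pq. pq \<in> x)"
      have p0: "pq0 \<in> x" unfolding pq0_def using some[OF xX] .
      have "g pq0 \<in> \<Union>U" using x p0 unfolding T_def by blast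
      then obtain Ob where Ob: "Ob \<in> U" "g pq0 \<in> Ob" by blast
      have sxe: "s x = Vorbit n j (g pq0)" using sx[OF xX p0] .
      have "Ob = s x" using PVj[of Ob "s x"] Ob U1 intop x sxe gself by blast
      thus "x \<in> {x \<in> X - D. s x \<in> U}" using Ob x by blast
    qed
    show ?thesis unfolding openin_subtopology eq using oT by blast
  qed
  have "continuous_map (subtopology (Xtop n \<alpha>) (X - D)) (Vtop n \<alpha> j) s"
    unfolding continuous_map TX Vtop_space[OF ij(2)]
  proof
    show "s ` (X - D) \<subseteq> Vset n \<alpha> j" using intop by blast
    show "\<forall>U. openin (Vtop n \<alpha> j) U \<longrightarrow> openin (subtopology (Xtop n \<alpha>) (X - D)) {x \<in> X - D. s x \<in> U}"
      using opn by blast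
  qed
  thus ?thesis using proj unfolding X_def D_def by blast
qed

end
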